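(* In the oligopoly game below, for all parameter values ($\alpha>0$, unit $\boldsymbol\beta$, $\boldsymbol\gamma$ with all entries positive) there exists at least one equilibrium of one of the following types: (a) an equilibrium with $\mathbf A^*\mathbf q^*=\boldsymbol\beta$ and $\mathbf q^*=\boldsymbol\gamma/(2+\alpha)$; (b) an equilibrium with $\mathbf a_i^*=\boldsymbol\beta$ for all $i$ (product concentration); (c) an equilibrium exhibiting dominant-firm polarization, i.e. $\mathbf a_i^*=\boldsymbol\beta$ for exactly one firm $i$, which satisfies $\gamma_i=\|\boldsymbol\gamma\|_\infty$, and $\mathbf a_j^*=-\boldsymbol\beta$ for all $j\ne i$. Moreover, every equilibrium $(\mathbf A^*,\mathbf q^* )$ is either of type (a), or satisfies $\mathbf a_i^*=\sigma_i\boldsymbol\beta$ for all $i$ for some $\boldsymbol\sigma\in\{-1,1\}^n$ (in which case $\boldsymbol\sigma$ satisfies $(2+\alpha)-\frac{2+(n+1)\alpha}{2(1+\alpha)}\min_{j:\sigma_j=-1}\gamma_j\le\boldsymbol\sigma^\top\boldsymbol\gamma\le(2+\alpha)+\frac{2+(n+1)\alpha}{2(1+\alpha)}\min_{j:\sigma_j=1}\gamma_j$, with $\min\emptyset=+\infty$, and $\mathbf q^*=\frac{\boldsymbol\gamma}{2+\alpha}-\frac{\alpha(\boldsymbol\sigma^\top\boldsymbol\gamma-(2+\alpha))}{(2+\alpha)(2+(n+1)\alpha)}\boldsymbol\sigma$).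
   Context: Model: integers $n\ge2$, $m\ge2$; $\alpha>0$, $\boldsymbol\beta\in\mathbb R^m$ with $\|\boldsymbol\beta\|_2=1$, $\boldsymbol\gamma\in\mathbb R^n$ with all $\gamma_i>0$. Firm $i$ chooses a unit vector $\mathbf a_i\in\mathbb R^m$ and $q_i\ge0$, earning $\Pi_i=\alpha q_i\mathbf a_i^\top(\boldsymbol\beta-\sum_{j\ne i}q_j\mathbf a_j)-(1+\alpha)q_i^2+\gamma_iq_i$. $\mathbf A=[\mathbf a_1,\dots,\mathbf a_n]$. An equilibrium is a profile $(\mathbf A^*,\mathbf q^* )$ in which each $(\mathbf a_i^*,q_i^* )$ maximizes $\Pi_i$ over unit $\mathbf a_i$ and $q_i\ge0$ given the others' choices. $\|\boldsymbol\gamma\|_\infty=\max_i\gamma_i$. *)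

theory Defs
  imports "HOL-Analysis.Analysis"
begin

text \<open>Firms are indexed by the finite type 'n (n = CARD('n)), product space is real^'m.
  A profile is A :: (real^'m)^'n (A $ i = a_i) and q :: real^'n.\<close>

definition profit :: "real \<Rightarrow> real^'m \<Rightarrow> real^'n \<Rightarrow> (real^'m)^'n \<Rightarrow> real^'n
    \<Rightarrow> 'n \<Rightarrow> real^'m \<Rightarrow> real \<Rightarrow> real" where
  "profit \<alpha> \<beta> \<gamma> A q i a x =
     \<alpha> * x * (a \<bullet> (\<beta> - (\<Sum>j\<in>UNIV - {i}. (q $ j) *\<^sub>R (A $ j))))
     - (1 + \<alpha>) * x\<^sup>2 + (\<gamma> $ i) * x"

definition equilibrium :: "real \<Rightarrow> real^'m \<Rightarrow> real^'n \<Rightarrow> (real^'m)^'n \<Rightarrow> real^'n \<Rightarrow> bool" where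
  "equilibrium \<alpha> \<beta> \<gamma> A q \<longleftrightarrow>
     (\<forall>i. norm (A $ i) = 1 \<and> q $ i \<ge> 0 \<and>
        (\<forall>a x. norm a = 1 \<longrightarrow> x \<ge> 0 \<longrightarrow>
           profit \<alpha> \<beta> \<gamma> A q i a x \<le> profit \<alpha> \<beta> \<gamma> A q i (A $ i) (q $ i)))"

definition Aq :: "(real^'m)^'n \<Rightarrow> real^'n \<Rightarrow> real^'m" where
  "Aq A q = (\<Sum>i\<in>UNIV. (q $ i) *\<^sub>R (A $ i))"

definition typeA :: "real \<Rightarrow> real^'m \<Rightarrow> real^'n \<Rightarrow> (real^'m)^'n \<Rightarrow> real^'n \<Rightarrow> bool" where
  "typeA \<alpha> \<beta> \<gamma> A q \<longleftrightarrow> Aq A q = \<beta> \<and> q = (1 / (2 + \<alpha>)) *\<^sub>R \<gamma>"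

definition typeB :: "real^'m \<Rightarrow> (real^'m)^'n \<Rightarrow> bool" where
  "typeB \<beta> A \<longleftrightarrow> (\<forall>i. A $ i = \<beta>)"

definition typeC :: "real^'m \<Rightarrow> real^'n \<Rightarrow> (real^'m)^'n \<Rightarrow> bool" where
  "typeC \<beta> \<gamma> A \<longleftrightarrow>
     (\<exists>i. A $ i = \<beta> \<and> \<gamma> $ i = Max (range (\<lambda>k. \<gamma> $ k)) \<and>
          (\<forall>j. j \<noteq> i \<longrightarrow> A $ j = - \<beta>))"

end

theory Submission
  imports Defs
begin


lemma br_char:
  fixes g a0 :: "'a::real_inner"
  assumes al: "\<alpha> > 0" and ga: "c > 0" and a0: "norm a0 = 1" and x0: "x0 \<ge> 0"
  shows "(\<forall>a x. norm a = 1 \<longrightarrow> x \<ge> 0 \<longrightarrow>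
            \<alpha> * x * (a \<bullet> g) - (1 + \<alpha>) * x\<^sup>2 + c * x \<le> \<alpha> * x0 * (a0 \<bullet> g) - (1 + \<alpha>) * x0\<^sup>2 + c * x0)
         \<longleftrightarrow> (x0 = (\<alpha> * norm g + c) / (2 * (1 + \<alpha>)) \<and> a0 \<bullet> g = norm g)"
proof -
  define xs where "xs = (\<alpha> * norm g + c) / (2 * (1 + \<alpha>))"
  have xs2: "2 * (1 + \<alpha>) * xs = \<alpha> * norm g + c" unfolding xs_def using al by simp
  have xspos: "xs > 0" unfolding xs_def using al ga
    by (intro divide_pos_pos add_nonneg_pos mult_nonneg_nonneg) auto
  have key: "\<And>x. \<alpha> * x * norm g - (1 + \<alpha>) * x\<^sup>2 + c * x = (1 + \<alpha>) * (xs\<^sup>2 - (x - xs)\<^sup>2)"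
    using xs2 by (simp add: power2_eq_square algebra_simps)
  have cs: "\<And>a x. norm a = 1 \<Longrightarrow> x \<ge> 0 \<Longrightarrow> \<alpha> * x * (a \<bullet> g) \<le> \<alpha> * x * norm g"
  proof -
    fix a :: 'a and x :: real assume "norm a = 1" "x \<ge> 0"
    then have "a \<bullet> g \<le> norm g" using norm_cauchy_schwarz[of a g] by simp
    then show "\<alpha> * x * (a \<bullet> g) \<le> \<alpha> * x * norm g" using al \<open>x \<ge> 0\<close> by (simp add: mult_left_mono)
  qed
  obtain as where as: "norm as = 1" "as \<bullet> g = norm g"
  proof (cases "g = 0")
    case True then show ?thesis using that a0 by auto
  next
    case False
    show ?thesis using that[of "g /\<^sub>R norm g"] False
      by (simp add: inner_commute dot_square_norm power2_eq_square)
  qed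
  show ?thesis
  proof
    assume H: "\<forall>a x. norm a = 1 \<longrightarrow> x \<ge> 0 \<longrightarrow>
            \<alpha> * x * (a \<bullet> g) - (1 + \<alpha>) * x\<^sup>2 + c * x \<le> \<alpha> * x0 * (a0 \<bullet> g) - (1 + \<alpha>) * x0\<^sup>2 + c * x0"
    have h1: "\<alpha> * xs * norm g - (1 + \<alpha>) * xs\<^sup>2 + c * xs \<le> \<alpha> * x0 * (a0 \<bullet> g) - (1 + \<alpha>) * x0\<^sup>2 + c * x0"
      using H as xspos by force
    have h2: "\<alpha> * x0 * (a0 \<bullet> g) \<le> \<alpha> * x0 * norm g" using cs a0 x0 by blast
    have "(1 + \<alpha>) * (xs\<^sup>2 - (xs - xs)\<^sup>2) \<le> (1 + \<alpha>) * (xs\<^sup>2 - (x0 - xs)\<^sup>2)"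
      using h1 h2 key[of xs] key[of x0] by linarith
    then have "(x0 - xs)\<^sup>2 \<le> 0" using al by (simp add: mult_le_cancel_left_pos)
    then have ex: "x0 = xs" by simp
    then have "\<alpha> * x0 * norm g \<le> \<alpha> * x0 * (a0 \<bullet> g)" using h1 h2 by simp
    then have "norm g \<le> a0 \<bullet> g" using al xspos ex by (simp add: mult_le_cancel_left_pos)
    then show "x0 = (\<alpha> * norm g + c) / (2 * (1 + \<alpha>)) \<and> a0 \<bullet> g = norm g"
      using ex h2 unfolding xs_def using cs[OF a0 x0] al xspos ex
      by (smt (verit) mult_le_cancel_left_pos mult_pos_pos)
  next
    assume H: "x0 = (\<alpha> * norm g + c) / (2 * (1 + \<alpha>)) \<and> a0 \<bullet> g = norm g"
    show "\<forall>a x. norm a = 1 \<longrightarrow> x \<ge> 0 \<longrightarrow>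
            \<alpha> * x * (a \<bullet> g) - (1 + \<alpha>) * x\<^sup>2 + c * x \<le> \<alpha> * x0 * (a0 \<bullet> g) - (1 + \<alpha>) * x0\<^sup>2 + c * x0"
    proof (intro allI impI)
      fix a :: 'a and x :: real assume "norm a = 1" "x \<ge> 0"
      have "\<alpha> * x * (a \<bullet> g) - (1 + \<alpha>) * x\<^sup>2 + c * x \<le> (1 + \<alpha>) * (xs\<^sup>2 - (x - xs)\<^sup>2)"
        using cs[OF \<open>norm a = 1\<close> \<open>x \<ge> 0\<close>] key[of x] by linarith
      also have "\<dots> \<le> (1 + \<alpha>) * xs\<^sup>2" using al by (simp add: mult_left_mono)
      also have "\<dots> = \<alpha> * x0 * (a0 \<bullet> g) - (1 + \<alpha>) * x0\<^sup>2 + c * x0"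
        using H key[of xs] unfolding xs_def by simp
      finally show "\<alpha> * x * (a \<bullet> g) - (1 + \<alpha>) * x\<^sup>2 + c * x \<le> \<alpha> * x0 * (a0 \<bullet> g) - (1 + \<alpha>) * x0\<^sup>2 + c * x0" .
    qed
  qed
qed



lemma triangle_exists:
  fixes a b c :: real
  assumes a: "a > 0" and b: "b \<ge> 0" and c: "c \<ge> 0" and h1: "\<bar>a - b\<bar> \<le> c" and h2: "c \<le> a + b"
  shows "\<exists>z w :: complex. cmod z = 1 \<and> cmod w = 1 \<and> of_real a * z + of_real b * w = of_real c"
proof (cases "b = 0")
  case True
  then have "c = a" using h1 h2 by auto
  then show ?thesis using True by (intro exI[of _ 1]) auto
next
  case bpos: False
  then have bp: "b > 0" using b by auto
  show ?thesis
  proof (cases "c = 0")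
    case True
    then have "a = b" using h1 by auto
    then show ?thesis using True by (intro exI[of _ 1] exI[of _ "-1"]) auto
  next
    case False
    then have cp: "c > 0" using c by auto
    define x where "x = (c^2 + a^2 - b^2) / (2*c)"
    have x2: "2*c*x = c^2 + a^2 - b^2" unfolding x_def using cp by simp
    have "x^2 \<le> a^2"
    proof -
      have "(2*c*x)^2 \<le> (2*c*a)^2"
      proof -
        have e1: "(c+a)^2 \<ge> b^2" using h1 b a c by (intro power_mono) auto
        have "\<bar>c - a\<bar> \<le> \<bar>b\<bar>" using h1 h2 b by (auto simp: abs_le_iff)
        then have e2: "(c-a)^2 \<le> b^2" using abs_le_square_iff by blast
        have u1: "c^2 + a^2 - b^2 \<le> 2*c*a" using e2 by (simp add: power2_eq_square algebra_simps)
        have u2: "-(c^2 + a^2 - b^2) \<le> 2*c*a" using e1 by (simp add: power2_eq_square algebra_simps)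
        have "\<bar>2*c*x\<bar> \<le> 2*c*a" unfolding x2 using u1 u2 by linarith
        moreover have "\<bar>2*c*a\<bar> = 2*c*a" using a cp by simp
        ultimately have "\<bar>2*c*x\<bar> \<le> \<bar>2*c*a\<bar>" by simp
        then show ?thesis using abs_le_square_iff by blast
      qed
      then have "(2*c)^2 * x^2 \<le> (2*c)^2 * a^2" by (simp add: power_mult_distrib)
      then show ?thesis using cp by simp
    qed
    define y where "y = sqrt (a^2 - x^2)"
    have y2: "y^2 = a^2 - x^2" unfolding y_def using \<open>x^2 \<le> a^2\<close> by simp
    define z where "z = Complex (x/a) (y/a)"
    define w where "w = Complex ((c-x)/b) (-y/b)"
    have ax: "x / a * a = x" and ay: "y / a * a = y" using a by simp_all
    have "(x/a)^2 + (y/a)^2 = (x^2 + y^2)/a^2" by (simp add: power_divide add_divide_distrib)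
    also have "x^2 + y^2 = a^2" using y2 by simp
    finally have "(x/a)^2 + (y/a)^2 = 1" using a by simp
    then have "cmod z = 1" unfolding z_def cmod_def by simp
    moreover have "cmod w = 1"
    proof -
      have e: "(c-x)^2 + y^2 = b^2" using y2 x2 by (simp add: power2_eq_square algebra_simps)
      have "((c-x)/b)^2 + (-y/b)^2 = ((c-x)^2 + y^2)/b^2" by (simp add: power_divide add_divide_distrib)
      also have "\<dots> = 1" unfolding e using bp by simp
      finally show ?thesis unfolding w_def cmod_def by simp
    qed
    moreover have "of_real a * z + of_real b * w = of_real c"
    proof -
      have r1: "a * (x / a) + b * ((c - x) / b) = c" using a bp by simp
      have r2: "a * (y / a) + b * (- y / b) = 0" using a bp by simp
      show ?thesis unfolding z_def w_def complex_eq_iff using r1 r2 by simp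
    qed
    ultimately show ?thesis by blast
  qed
qed

lemma polygon_exists:
  fixes q :: "'i \<Rightarrow> real"
  assumes "finite S" "S \<noteq> {}" "\<forall>i\<in>S. q i > 0"
  shows "\<forall>r. 0 \<le> r \<longrightarrow> r \<le> sum q S \<longrightarrow> (\<forall>i\<in>S. 2 * q i - sum q S \<le> r) \<longrightarrow>
    (\<exists>z. (\<forall>i\<in>S. cmod (z i) = 1) \<and> (\<Sum>i\<in>S. of_real (q i) * z i) = of_real r)"
  using assms
proof (induction S rule: finite_ne_induct)
  case (singleton x)
  show ?case
  proof (intro allI impI)
    fix r assume "0 \<le> r" "r \<le> sum q {x}" "\<forall>i\<in>{x}. 2 * q i - sum q {x} \<le> r"
    then have "r = q x" by auto
    then show "\<exists>z. (\<forall>i\<in>{x}. cmod (z i) = 1) \<and> (\<Sum>i\<in>{x}. of_real (q i) * z i) = of_real r"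
      by (intro exI[of _ "\<lambda>_. 1"]) auto
  qed
next
  case (insert x F)
  have qpos: "\<forall>i\<in>F. q i > 0" and qx: "q x > 0" using insert.prems by auto
  show ?case
  proof (intro allI impI)
    fix r assume r0: "0 \<le> r" and r1: "r \<le> sum q (insert x F)"
      and r2: "\<forall>i\<in>insert x F. 2 * q i - sum q (insert x F) \<le> r"
    define R where "R = sum q F"
    have sx: "sum q (insert x F) = q x + R" unfolding R_def using insert.hyps by simp
    define M where "M = Max ((\<lambda>i. 2 * q i - R) ` F)"
    have Mge: "\<And>i. i \<in> F \<Longrightarrow> 2 * q i - R \<le> M" unfolding M_def using insert.hyps by auto
    obtain k where k: "k \<in> F" "M = 2 * q k - R"
    proof -
      have "M \<in> (\<lambda>i. 2 * q i - R) ` F" unfolding M_def using insert.hyps by (intro Max_in) auto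
      then show ?thesis using that by blast
    qed
    have qkR: "q k \<le> R" unfolding R_def using k(1) insert.hyps qpos
      by (intro member_le_sum) auto
    define \<rho> where "\<rho> = max \<bar>r - q x\<bar> M"
    have rho0: "0 \<le> \<rho>" unfolding \<rho>_def by simp
    have rhoR: "\<rho> \<le> R"
    proof -
      have "2 * q x - (q x + R) \<le> r" using r2 sx by auto
      then have "\<bar>r - q x\<bar> \<le> R" using r1 sx by linarith
      moreover have "M \<le> R" using k(2) qkR by linarith
      ultimately show ?thesis unfolding \<rho>_def by simp
    qed
    have rhoM: "\<forall>i\<in>F. 2 * q i - R \<le> \<rho>" using Mge unfolding \<rho>_def by force
    have rk: "2 * q k - (q x + R) \<le> r" using r2 k(1) sx by auto
    have t1: "\<bar>q x - \<rho>\<bar> \<le> r"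
    proof -
      have a1: "q x - \<rho> \<le> r" unfolding \<rho>_def by (smt (verit) max.cobounded1)
      have a2: "\<bar>r - q x\<bar> - q x \<le> r" using r0 qx by linarith
      have a3: "M - q x \<le> r" using rk k(2) by linarith
      have "\<rho> - q x \<le> r" unfolding \<rho>_def using a2 a3 by linarith
      then show ?thesis using a1 by linarith
    qed
    have t2: "r \<le> q x + \<rho>" unfolding \<rho>_def by auto
    obtain z0 w where zw: "cmod z0 = 1" "cmod w = 1" "of_real (q x) * z0 + of_real \<rho> * w = of_real r"
      using triangle_exists[OF qx rho0 r0 t1 t2] by blast
    obtain z' where z': "\<forall>i\<in>F. cmod (z' i) = 1" "(\<Sum>i\<in>F. of_real (q i) * z' i) = of_real \<rho>"
      using insert.IH qpos rho0 rhoR rhoM unfolding R_def by blast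
    define z where "z = (\<lambda>i. if i = x then z0 else w * z' i)"
    have "(\<Sum>i\<in>insert x F. of_real (q i) * z i) = of_real (q x) * z0 + (\<Sum>i\<in>F. of_real (q i) * (w * z' i))"
    proof -
      have "(\<Sum>i\<in>insert x F. of_real (q i) * z i) = of_real (q x) * z x + (\<Sum>i\<in>F. of_real (q i) * z i)"
        using insert.hyps by (simp add: sum.insert)
      moreover have "(\<Sum>i\<in>F. of_real (q i) * z i) = (\<Sum>i\<in>F. of_real (q i) * (w * z' i))"
        using insert.hyps unfolding z_def by (intro sum.cong) auto
      ultimately show ?thesis unfolding z_def by simp
    qed
    also have "(\<Sum>i\<in>F. of_real (q i) * (w * z' i)) = w * (\<Sum>i\<in>F. of_real (q i) * z' i)"
      by (simp add: sum_distrib_left mult.left_commute)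
    also have "w * (\<Sum>i\<in>F. of_real (q i) * z' i) = of_real \<rho> * w" using z'(2) by (simp only: mult.commute)
    finally have "(\<Sum>i\<in>insert x F. of_real (q i) * z i) = of_real r"
      using zw(3) by simp
    moreover have "\<forall>i\<in>insert x F. cmod (z i) = 1" unfolding z_def using zw z' by (auto simp: norm_mult)
    ultimately show "\<exists>z. (\<forall>i\<in>insert x F. cmod (z i) = 1) \<and> (\<Sum>i\<in>insert x F. of_real (q i) * z i) = of_real r"
      by blast
  qed
qed



definition gg :: "real^'m \<Rightarrow> (real^'m)^'n \<Rightarrow> real^'n \<Rightarrow> 'n \<Rightarrow> real^'m" where
  "gg \<beta> A q i = \<beta> - (\<Sum>j\<in>UNIV - {i}. (q $ j) *\<^sub>R (A $ j))"

lemma eq_iff: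
  assumes al: "\<alpha> > 0" and ga: "\<forall>i. \<gamma> $ i > 0"
  shows "equilibrium \<alpha> \<beta> \<gamma> A q \<longleftrightarrow>
    (\<forall>i. norm (A $ i) = 1 \<and> q $ i = (\<alpha> * norm (gg \<beta> A q i) + \<gamma> $ i) / (2 * (1 + \<alpha>))
         \<and> (A $ i) \<bullet> gg \<beta> A q i = norm (gg \<beta> A q i))"
proof -
  have pf: "\<And>i a x. profit \<alpha> \<beta> \<gamma> A q i a x = \<alpha> * x * (a \<bullet> gg \<beta> A q i) - (1 + \<alpha>) * x\<^sup>2 + (\<gamma> $ i) * x"
    unfolding profit_def gg_def by simp
  have qpos: "0 \<le> (\<alpha> * norm (gg \<beta> A q i) + \<gamma> $ i) / (2 * (1 + \<alpha>))" for i
    using al ga by (smt (verit) divide_nonneg_pos mult_nonneg_nonneg norm_ge_zero)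
  show ?thesis
    unfolding equilibrium_def pf
  proof (intro iffI allI)
    fix i
    assume H: "\<forall>i. norm (A $ i) = 1 \<and> 0 \<le> q $ i \<and>
           (\<forall>a x. norm a = 1 \<longrightarrow> 0 \<le> x \<longrightarrow>
             \<alpha> * x * (a \<bullet> gg \<beta> A q i) - (1 + \<alpha>) * x\<^sup>2 + \<gamma> $ i * x
             \<le> \<alpha> * q $ i * (A $ i \<bullet> gg \<beta> A q i) - (1 + \<alpha>) * (q $ i)\<^sup>2 + \<gamma> $ i * q $ i)"
    then show "norm (A $ i) = 1 \<and> q $ i = (\<alpha> * norm (gg \<beta> A q i) + \<gamma> $ i) / (2 * (1 + \<alpha>))
         \<and> (A $ i) \<bullet> gg \<beta> A q i = norm (gg \<beta> A q i)"
      using br_char[OF al ga[rule_format, of i], of "A $ i" "q $ i" "gg \<beta> A q i"] by blast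
  next
    fix i
    assume H: "\<forall>i. norm (A $ i) = 1 \<and> q $ i = (\<alpha> * norm (gg \<beta> A q i) + \<gamma> $ i) / (2 * (1 + \<alpha>))
         \<and> (A $ i) \<bullet> gg \<beta> A q i = norm (gg \<beta> A q i)"
    then have q0: "0 \<le> q $ i" using qpos by metis
    then show "norm (A $ i) = 1 \<and> 0 \<le> q $ i \<and>
           (\<forall>a x. norm a = 1 \<longrightarrow> 0 \<le> x \<longrightarrow>
             \<alpha> * x * (a \<bullet> gg \<beta> A q i) - (1 + \<alpha>) * x\<^sup>2 + \<gamma> $ i * x
             \<le> \<alpha> * q $ i * (A $ i \<bullet> gg \<beta> A q i) - (1 + \<alpha>) * (q $ i)\<^sup>2 + \<gamma> $ i * q $ i)"
      using H br_char[OF al ga[rule_format, of i], of "A $ i" "q $ i" "gg \<beta> A q i"] by blast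
  qed
qed

lemma gg_Aq: "gg \<beta> A q i = \<beta> - Aq A q + (q $ i) *\<^sub>R (A $ i)"
proof -
  have "Aq A q = (q $ i) *\<^sub>R (A $ i) + (\<Sum>j\<in>UNIV - {i}. (q $ j) *\<^sub>R (A $ j))"
    unfolding Aq_def by (simp add: sum.remove)
  then show ?thesis unfolding gg_def by (simp add: algebra_simps)
qed

lemma align:
  fixes a g :: "'a::real_inner"
  assumes "norm a = 1" "a \<bullet> g = norm g"
  shows "g = norm g *\<^sub>R a"
proof -
  have aa: "a \<bullet> a = 1" using assms(1) by (simp add: norm_eq_1)
  have "(g - norm g *\<^sub>R a) \<bullet> (g - norm g *\<^sub>R a) = g \<bullet> g - 2 * norm g * (a \<bullet> g) + (norm g)^2 * (a \<bullet> a)"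
    by (simp add: algebra_simps inner_commute power2_eq_square)
  also have "\<dots> = 0" using aa assms(2) by (simp add: dot_square_norm power2_eq_square)
  finally show ?thesis by simp
qed



lemma part2_sign:
  fixes \<beta> :: "real^'m" and A :: "(real^'m)^'n"
  assumes al: "\<alpha> > 0" and ga: "\<forall>i. \<gamma> $ i > 0" and beta: "norm \<beta> = 1"
    and eq: "equilibrium \<alpha> \<beta> \<gamma> A q"
  shows "typeA \<alpha> \<beta> \<gamma> A q \<or> (\<forall>i. A $ i = \<beta> \<or> A $ i = - \<beta>)"
proof -
  note E = eq[unfolded eq_iff[OF al ga]]
  define r where "r i = norm (gg \<beta> A q i)" for i
  have nA: "\<And>i. norm (A $ i) = 1" using E by blast
  have qi: "\<And>i. q $ i = (\<alpha> * r i + \<gamma> $ i) / (2 * (1 + \<alpha>))" using E unfolding r_def by blast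
  have gA: "\<And>i. gg \<beta> A q i = r i *\<^sub>R A $ i" using E align unfolding r_def by metis
  have key: "\<And>i. \<beta> - Aq A q = (r i - q $ i) *\<^sub>R A $ i"
    using gA gg_Aq by (metis (no_types, lifting) add_diff_cancel scaleR_left_diff_distrib)
  show ?thesis
  proof (cases "Aq A q = \<beta>")
    case True
    have "\<And>i. q $ i = \<gamma> $ i / (2 + \<alpha>)"
    proof -
      fix i
      have "(r i - q $ i) *\<^sub>R A $ i = 0" using key[of i] True by simp
      then have rq: "r i = q $ i" using nA[of i] by auto
      have e: "2 * q $ i + 2 * (\<alpha> * q $ i) = \<alpha> * r i + \<gamma> $ i" using qi[of i] al by (simp add: field_simps)
      have ar: "\<alpha> * r i = \<alpha> * q $ i" using rq by simp
      have "(2 + \<alpha>) * q $ i = \<gamma> $ i" using e ar by (simp add: distrib_right)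
      then show "q $ i = \<gamma> $ i / (2 + \<alpha>)" using al by (simp add: field_simps)
    qed
    then have "typeA \<alpha> \<beta> \<gamma> A q" unfolding typeA_def using True by (simp add: vec_eq_iff)
    then show ?thesis by blast
  next
    case False
    define w where "w = \<beta> - Aq A q"
    have w0: "w \<noteq> 0" using False unfolding w_def by simp
    define d where "d i = r i - q $ i" for i
    have wd: "\<And>i. w = d i *\<^sub>R A $ i" unfolding w_def d_def using key by blast
    have nd: "\<bar>d i\<bar> = norm w" for i
    proof -
      have "norm w = norm (d i *\<^sub>R A $ i)" using wd by metis
      then show ?thesis using nA[of i] by simp
    qed
    have d0: "d i \<noteq> 0" for i using nd[of i] w0 by auto
    define u where "u = w /\<^sub>R norm w"
    define \<tau> where "\<tau> i = norm w / d i" for i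
    have tau: "\<tau> i = 1 \<or> \<tau> i = -1" for i
    proof (cases "d i \<ge> 0")
      case True
      then have "d i = norm w" using nd[of i] by simp
      then show ?thesis unfolding \<tau>_def using d0[of i] by simp
    next
      case False
      then have "d i = - norm w" using nd[of i] by simp
      then show ?thesis unfolding \<tau>_def using d0[of i] by simp
    qed
    have Au: "A $ i = \<tau> i *\<^sub>R u" for i
    proof -
      have "\<tau> i *\<^sub>R u = (1 / d i) *\<^sub>R w" unfolding u_def \<tau>_def using w0 by simp
      also have "\<dots> = A $ i" using wd[of i] d0[of i] by simp
      finally show ?thesis by simp
    qed
    define k where "k = norm w + (\<Sum>i\<in>UNIV. q $ i * \<tau> i)"
    have "Aq A q = (\<Sum>i\<in>UNIV. q $ i * \<tau> i) *\<^sub>R u"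
      unfolding Aq_def Au by (simp add: scaleR_sum_left)
    moreover have "w = norm w *\<^sub>R u" unfolding u_def using w0 by simp
    ultimately have bk: "\<beta> = k *\<^sub>R u" unfolding k_def using w_def
      by (metis diff_add_cancel scaleR_left_distrib)
    have nu: "norm u = 1" unfolding u_def using w0 by simp
    have "\<bar>k\<bar> = 1" using bk beta nu by simp
    then have "u = k *\<^sub>R \<beta>" using bk by (cases "k \<ge> 0") auto
    then have "\<forall>i. A $ i = (\<tau> i * k) *\<^sub>R \<beta>" using Au by simp
    moreover have "\<forall>i. \<tau> i * k = 1 \<or> \<tau> i * k = -1"
    proof
      fix i
      have "k = 1 \<or> k = -1" using \<open>\<bar>k\<bar> = 1\<close> by linarith
      then show "\<tau> i * k = 1 \<or> \<tau> i * k = -1" using tau[of i] by auto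
    qed
    ultimately have "\<forall>i. A $ i = \<beta> \<or> A $ i = - \<beta>" by (metis scaleR_minus1_left scaleR_one)
    then show ?thesis by blast
  qed
qed



lemma gg_sigma:
  fixes \<beta> :: "real^'m" and A :: "(real^'m)^'n" and \<sigma> q :: "real^'n"
  assumes As: "\<forall>i. A $ i = (\<sigma> $ i) *\<^sub>R \<beta>"
  shows "gg \<beta> A q i = (1 - (\<Sum>j\<in>UNIV. q $ j * \<sigma> $ j) + q $ i * \<sigma> $ i) *\<^sub>R \<beta>"
proof -
  have h1: "(\<Sum>j\<in>UNIV - {i}. (q $ j) *\<^sub>R (A $ j)) = (\<Sum>j\<in>UNIV - {i}. q $ j * \<sigma> $ j) *\<^sub>R \<beta>"
    using As by (simp add: scaleR_sum_left)
  have h2: "(\<Sum>j\<in>UNIV - {i}. q $ j * \<sigma> $ j) = (\<Sum>j\<in>UNIV. q $ j * \<sigma> $ j) - q $ i * \<sigma> $ i"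
    by (simp add: sum_diff1)
  show ?thesis unfolding gg_def h1 h2 by (simp add: algebra_simps)
qed

lemma sum_sigma_sq:
  fixes \<sigma> :: "real^'n"
  assumes sg: "\<forall>i. \<sigma> $ i = -1 \<or> \<sigma> $ i = 1"
  shows "(\<Sum>i\<in>UNIV. \<sigma> $ i * \<sigma> $ i) = real CARD('n)"
proof -
  have "\<And>i. \<sigma> $ i * \<sigma> $ i = 1" using sg by (metis mult_1 mult_minus1 minus_minus)
  then show ?thesis by simp
qed

lemma inner_sg: "(\<sigma> :: real^'n) \<bullet> \<gamma> = (\<Sum>i\<in>UNIV. \<sigma> $ i * \<gamma> $ i)"
  by (simp add: inner_vec_def)

lemma sigma_nec:
  fixes \<beta> :: "real^'m" and A :: "(real^'m)^'n" and \<sigma> q :: "real^'n"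
  assumes al: "\<alpha> > 0" and ga: "\<forall>i. \<gamma> $ i > 0" and beta: "norm \<beta> = 1"
    and eq: "equilibrium \<alpha> \<beta> \<gamma> A q"
    and sg: "\<forall>i. \<sigma> $ i = -1 \<or> \<sigma> $ i = 1" and As: "\<forall>i. A $ i = (\<sigma> $ i) *\<^sub>R \<beta>"
  shows "(\<forall>j. \<sigma> $ j = -1 \<longrightarrow>
                (2 + \<alpha>) - (2 + (real CARD('n) + 1) * \<alpha>) / (2 * (1 + \<alpha>)) * \<gamma> $ j \<le> \<sigma> \<bullet> \<gamma>) \<and>
             (\<forall>j. \<sigma> $ j = 1 \<longrightarrow>
                \<sigma> \<bullet> \<gamma> \<le> (2 + \<alpha>) + (2 + (real CARD('n) + 1) * \<alpha>) / (2 * (1 + \<alpha>)) * \<gamma> $ j) \<and>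
             q = (1 / (2 + \<alpha>)) *\<^sub>R \<gamma>
                 - (\<alpha> * (\<sigma> \<bullet> \<gamma> - (2 + \<alpha>)) / ((2 + \<alpha>) * (2 + (real CARD('n) + 1) * \<alpha>))) *\<^sub>R \<sigma>"
proof -
  note E = eq[unfolded eq_iff[OF al ga]]
  define N where "N = real CARD('n)"
  define D where "D = 2 + (N + 1) * \<alpha>"
  define T where "T = \<sigma> \<bullet> \<gamma>"
  define S where "S = (\<Sum>j\<in>UNIV. q $ j * \<sigma> $ j)"
  define X where "X = 1 - S"
  have Dpos: "D > 0" unfolding D_def N_def using al by (simp add: add_pos_nonneg)
  have ss: "\<sigma> $ i * \<sigma> $ i = 1" for i using sg by (metis mult_1 mult_minus1 minus_minus)
  define c where "c i = X + q $ i * \<sigma> $ i" for i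
  have gc: "gg \<beta> A q i = c i *\<^sub>R \<beta>" for i unfolding c_def X_def S_def using gg_sigma[OF As] by simp
  have bb: "\<beta> \<bullet> \<beta> = 1" using beta by (simp add: norm_eq_1)
  have nc: "norm (gg \<beta> A q i) = \<bar>c i\<bar>" for i using gc beta by simp
  have ac: "A $ i \<bullet> gg \<beta> A q i = \<sigma> $ i * c i" for i using gc As bb by simp
  have sc: "\<sigma> $ i * c i = \<bar>c i\<bar>" for i using E nc ac by metis
  have Ei: "(2 + \<alpha>) * q $ i = \<gamma> $ i + \<alpha> * \<sigma> $ i * X" for i
  proof -
    have "q $ i * (2 * (1 + \<alpha>)) = \<alpha> * (\<sigma> $ i * c i) + \<gamma> $ i" using E nc sc al by (simp add: field_simps)
    also have "\<sigma> $ i * c i = \<sigma> $ i * X + q $ i" unfolding c_def using ss[of i] by (simp add: algebra_simps)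
    finally show ?thesis by (simp add: algebra_simps)
  qed
  have sumE: "(2 + \<alpha>) * S = T + \<alpha> * N * X"
  proof -
    have "(2 + \<alpha>) * S = (\<Sum>i\<in>UNIV. ((2 + \<alpha>) * q $ i) * \<sigma> $ i)" unfolding S_def
      by (simp add: sum_distrib_left algebra_simps)
    also have "\<dots> = (\<Sum>i\<in>UNIV. \<sigma> $ i * \<gamma> $ i + \<alpha> * X * (\<sigma> $ i * \<sigma> $ i))"
      unfolding Ei by (intro sum.cong) (auto simp: algebra_simps)
    also have "\<dots> = T + \<alpha> * X * N" unfolding T_def inner_sg N_def
      by (simp add: sum.distrib sum_distrib_left[symmetric] sum_sigma_sq[OF sg])
    finally show ?thesis by simp
  qed
  have DX: "D * X = 2 + \<alpha> - T" using sumE unfolding D_def X_def by (simp add: algebra_simps)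
  have Xeq: "X = (2 + \<alpha> - T) / D" using DX Dpos by (simp add: field_simps)
  have qfor: "q = (1 / (2 + \<alpha>)) *\<^sub>R \<gamma> - (\<alpha> * (T - (2 + \<alpha>)) / ((2 + \<alpha>) * D)) *\<^sub>R \<sigma>"
    unfolding vec_eq_iff
  proof (intro allI)
    fix i
    have a2: "2 + \<alpha> \<noteq> 0" using al by simp
    have d2: "D \<noteq> 0" using Dpos by simp
    have "q $ i = (\<gamma> $ i + \<alpha> * \<sigma> $ i * X) / (2 + \<alpha>)" using Ei[of i] a2
      by (simp add: eq_divide_eq mult.commute)
    then have "q $ i = \<gamma> $ i / (2 + \<alpha>) + (\<alpha> * \<sigma> $ i * X) / (2 + \<alpha>)"
      by (simp add: add_divide_distrib)
    moreover have "\<alpha> * (T - (2 + \<alpha>)) / ((2 + \<alpha>) * D) * \<sigma> $ i = - ((\<alpha> * \<sigma> $ i * X) / (2 + \<alpha>))"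
      unfolding Xeq using a2 d2 by (simp add: field_simps) (metis minus_diff_eq minus_divide_left)
    ultimately show "q $ i = ((1 / (2 + \<alpha>)) *\<^sub>R \<gamma> - (\<alpha> * (T - (2 + \<alpha>)) / ((2 + \<alpha>) * D)) *\<^sub>R \<sigma>) $ i"
      by simp
  qed
  have pos: "0 \<le> \<sigma> $ i * X + q $ i" for i
  proof -
    have "0 \<le> \<sigma> $ i * c i" using sc[of i] by simp
    also have "\<sigma> $ i * c i = \<sigma> $ i * X + (\<sigma> $ i * \<sigma> $ i) * q $ i" unfolding c_def by (simp add: algebra_simps)
    finally show ?thesis using ss[of i] by simp
  qed
  have ineq: "0 \<le> (2 + 2 * \<alpha>) * \<sigma> $ i * X + \<gamma> $ i" for i
  proof -
    have "0 \<le> (2 + \<alpha>) * (\<sigma> $ i * X + q $ i)" using pos[of i] al by simp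
    also have "\<dots> = (2 + 2 * \<alpha>) * \<sigma> $ i * X + \<gamma> $ i" using Ei[of i] by (simp add: algebra_simps)
    finally show ?thesis .
  qed
  have i1: "(2 + \<alpha>) - D / (2 * (1 + \<alpha>)) * \<gamma> $ j \<le> T" if "\<sigma> $ j = -1" for j
  proof -
    have "(2 + 2 * \<alpha>) * X \<le> \<gamma> $ j" using ineq[of j] that by (simp add: algebra_simps)
    then have "(2 + 2 * \<alpha>) * (2 + \<alpha> - T) \<le> D * \<gamma> $ j" unfolding Xeq using Dpos by (simp add: field_simps)
    then show ?thesis using al by (simp add: field_simps)
  qed
  have i2: "T \<le> (2 + \<alpha>) + D / (2 * (1 + \<alpha>)) * \<gamma> $ j" if "\<sigma> $ j = 1" for j
  proof -
    have "0 \<le> (2 + 2 * \<alpha>) * X + \<gamma> $ j" using ineq[of j] that by simp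
    then have "0 \<le> (2 + 2 * \<alpha>) * (2 + \<alpha> - T) + D * \<gamma> $ j" unfolding Xeq using Dpos by (simp add: field_simps)
    then show ?thesis using al by (simp add: field_simps)
  qed
  show ?thesis using i1 i2 qfor unfolding D_def T_def N_def by blast
qed

lemma sigma_suff:
  fixes \<beta> :: "real^'m" and A :: "(real^'m)^'n" and \<sigma> q :: "real^'n"
  assumes al: "\<alpha> > 0" and ga: "\<forall>i. \<gamma> $ i > 0" and beta: "norm \<beta> = 1"
    and sg: "\<forall>i. \<sigma> $ i = -1 \<or> \<sigma> $ i = 1" and As: "\<forall>i. A $ i = (\<sigma> $ i) *\<^sub>R \<beta>"
    and i1: "\<forall>j. \<sigma> $ j = -1 \<longrightarrow>
                (2 + \<alpha>) - (2 + (real CARD('n) + 1) * \<alpha>) / (2 * (1 + \<alpha>)) * \<gamma> $ j \<le> \<sigma> \<bullet> \<gamma>"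
    and i2: "\<forall>j. \<sigma> $ j = 1 \<longrightarrow>
                \<sigma> \<bullet> \<gamma> \<le> (2 + \<alpha>) + (2 + (real CARD('n) + 1) * \<alpha>) / (2 * (1 + \<alpha>)) * \<gamma> $ j"
    and qf: "q = (1 / (2 + \<alpha>)) *\<^sub>R \<gamma>
                 - (\<alpha> * (\<sigma> \<bullet> \<gamma> - (2 + \<alpha>)) / ((2 + \<alpha>) * (2 + (real CARD('n) + 1) * \<alpha>))) *\<^sub>R \<sigma>"
  shows "equilibrium \<alpha> \<beta> \<gamma> A q"
proof -
  define N where "N = real CARD('n)"
  define D where "D = 2 + (N + 1) * \<alpha>"
  define T where "T = \<sigma> \<bullet> \<gamma>"
  define X where "X = (2 + \<alpha> - T) / D"
  define S where "S = (\<Sum>j\<in>UNIV. q $ j * \<sigma> $ j)"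
  have Dpos: "D > 0" unfolding D_def N_def using al by (simp add: add_pos_nonneg)
  have a2: "2 + \<alpha> \<noteq> 0" using al by simp
  have d2: "D \<noteq> 0" using Dpos by simp
  have DX: "D * X = 2 + \<alpha> - T" unfolding X_def using d2 by simp
  have ss: "\<sigma> $ i * \<sigma> $ i = 1" for i using sg by (metis mult_1 mult_minus1 minus_minus)
  have Ei: "(2 + \<alpha>) * q $ i = \<gamma> $ i + \<alpha> * \<sigma> $ i * X" for i
  proof -
    have "q $ i = \<gamma> $ i / (2 + \<alpha>) - \<alpha> * (T - (2 + \<alpha>)) / ((2 + \<alpha>) * D) * \<sigma> $ i"
      using qf unfolding T_def D_def N_def by simp
    moreover have "\<alpha> * (T - (2 + \<alpha>)) / ((2 + \<alpha>) * D) * \<sigma> $ i = - ((\<alpha> * \<sigma> $ i * X) / (2 + \<alpha>))"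
      unfolding X_def using a2 d2 by (simp add: field_simps) (metis minus_diff_eq minus_divide_left)
    ultimately have "q $ i = (\<gamma> $ i + \<alpha> * \<sigma> $ i * X) / (2 + \<alpha>)" by (simp add: add_divide_distrib)
    then show ?thesis using a2 by (simp add: eq_divide_eq mult.commute)
  qed
  have sumE: "(2 + \<alpha>) * S = T + \<alpha> * N * X"
  proof -
    have "(2 + \<alpha>) * S = (\<Sum>i\<in>UNIV. ((2 + \<alpha>) * q $ i) * \<sigma> $ i)" unfolding S_def
      by (simp add: sum_distrib_left algebra_simps)
    also have "\<dots> = (\<Sum>i\<in>UNIV. \<sigma> $ i * \<gamma> $ i + \<alpha> * X * (\<sigma> $ i * \<sigma> $ i))"
      unfolding Ei by (intro sum.cong) (auto simp: algebra_simps)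
    also have "\<dots> = T + \<alpha> * X * N" unfolding T_def inner_sg N_def
      by (simp add: sum.distrib sum_distrib_left[symmetric] sum_sigma_sq[OF sg])
    finally show ?thesis by simp
  qed
  have SX: "1 - S = X"
  proof -
    have "(2 + \<alpha>) * (1 - S) = (2 + \<alpha>) * X" using sumE DX unfolding D_def by (simp add: algebra_simps)
    then show ?thesis using a2 by simp
  qed
  define c where "c i = X + q $ i * \<sigma> $ i" for i
  have gc: "gg \<beta> A q i = c i *\<^sub>R \<beta>" for i unfolding c_def SX[symmetric] S_def using gg_sigma[OF As] by simp
  have bb: "\<beta> \<bullet> \<beta> = 1" using beta by (simp add: norm_eq_1)
  have nc: "norm (gg \<beta> A q i) = \<bar>c i\<bar>" for i using gc beta by simp
  have ac: "A $ i \<bullet> gg \<beta> A q i = \<sigma> $ i * c i" for i using gc As bb by simp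
  have scq: "\<sigma> $ i * c i = \<sigma> $ i * X + q $ i" for i
  proof -
    have "\<sigma> $ i * c i = \<sigma> $ i * X + (\<sigma> $ i * \<sigma> $ i) * q $ i" unfolding c_def by (simp add: algebra_simps)
    then show ?thesis using ss[of i] by simp
  qed
  have ineq: "0 \<le> (2 + 2 * \<alpha>) * \<sigma> $ i * X + \<gamma> $ i" for i
  proof (cases "\<sigma> $ i = 1")
    case True
    have "T \<le> (2 + \<alpha>) + D / (2 * (1 + \<alpha>)) * \<gamma> $ i" using i2 True unfolding T_def D_def N_def by blast
    then have "0 \<le> (2 + 2 * \<alpha>) * (2 + \<alpha> - T) + D * \<gamma> $ i" using al by (simp add: field_simps)
    then have "0 \<le> (2 + 2 * \<alpha>) * X + \<gamma> $ i" unfolding X_def using Dpos by (simp add: field_simps)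
    then show ?thesis using True by simp
  next
    case False
    then have F: "\<sigma> $ i = -1" using sg by blast
    have "(2 + \<alpha>) - D / (2 * (1 + \<alpha>)) * \<gamma> $ i \<le> T" using i1 F unfolding T_def D_def N_def by blast
    then have "(2 + 2 * \<alpha>) * (2 + \<alpha> - T) \<le> D * \<gamma> $ i" using al by (simp add: field_simps)
    then have "(2 + 2 * \<alpha>) * X \<le> \<gamma> $ i" unfolding X_def using Dpos by (simp add: field_simps)
    then show ?thesis using F by (simp add: algebra_simps)
  qed
  have pos: "0 \<le> \<sigma> $ i * c i" for i
  proof -
    have "(2 + \<alpha>) * (\<sigma> $ i * c i) = (2 + 2 * \<alpha>) * \<sigma> $ i * X + \<gamma> $ i"
      unfolding scq using Ei[of i] by (simp add: algebra_simps)
    then have "0 \<le> (2 + \<alpha>) * (\<sigma> $ i * c i)" using ineq[of i] by simp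
    then show ?thesis using al by (simp add: zero_le_mult_iff)
  qed
  have absc: "\<bar>c i\<bar> = \<sigma> $ i * c i" for i
  proof -
    have "\<bar>\<sigma> $ i * c i\<bar> = \<bar>c i\<bar>" using sg by (metis abs_minus_cancel abs_one mult_1 mult_minus1 abs_mult)
    then show ?thesis using pos[of i] by simp
  qed
  show ?thesis unfolding eq_iff[OF al ga]
  proof (intro allI conjI)
    fix i
    show "norm (A $ i) = 1" using As beta sg by (metis norm_minus_cancel scaleR_minus1_left scaleR_one)
    show "A $ i \<bullet> gg \<beta> A q i = norm (gg \<beta> A q i)" using ac nc absc by simp
    have "q $ i * (2 * (1 + \<alpha>)) = \<alpha> * (\<sigma> $ i * c i) + \<gamma> $ i"
      unfolding scq using Ei[of i] by (simp add: algebra_simps)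
    then show "q $ i = (\<alpha> * norm (gg \<beta> A q i) + \<gamma> $ i) / (2 * (1 + \<alpha>))"
      unfolding nc absc using al by (simp add: eq_divide_eq)
  qed
qed



lemma typeA_suff:
  fixes \<beta> :: "real^'m" and A :: "(real^'m)^'n" and q :: "real^'n"
  assumes al: "\<alpha> > 0" and ga: "\<forall>i. \<gamma> $ i > 0"
    and nA: "\<forall>i. norm (A $ i) = 1" and Aqb: "Aq A q = \<beta>" and qf: "q = (1 / (2 + \<alpha>)) *\<^sub>R \<gamma>"
  shows "equilibrium \<alpha> \<beta> \<gamma> A q"
  unfolding eq_iff[OF al ga]
proof (intro allI conjI)
  fix i
  have qi: "q $ i = \<gamma> $ i / (2 + \<alpha>)" using qf by simp
  have qp: "q $ i > 0" unfolding qi using al ga by simp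
  have g: "gg \<beta> A q i = q $ i *\<^sub>R A $ i" using gg_Aq[of \<beta> A q i] Aqb by simp
  have ng: "norm (gg \<beta> A q i) = q $ i" using g nA qp by simp
  have aa: "A $ i \<bullet> A $ i = 1" using nA by (simp add: norm_eq_1)
  show "norm (A $ i) = 1" using nA by blast
  show "A $ i \<bullet> gg \<beta> A q i = norm (gg \<beta> A q i)" using g ng aa by simp
  have "q $ i * (2 * (1 + \<alpha>)) = \<alpha> * q $ i + \<gamma> $ i" unfolding qi using al by (simp add: field_simps)
  then show "q $ i = (\<alpha> * norm (gg \<beta> A q i) + \<gamma> $ i) / (2 * (1 + \<alpha>))"
    unfolding ng using al by (simp add: eq_divide_eq)
qed

lemma unit_orth:
  fixes \<beta> :: "real^'m"
  assumes "CARD('m) \<ge> 2"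
  obtains e where "norm e = 1" "\<beta> \<bullet> e = 0"
proof -
  obtain y :: "real^'m" where y: "y \<noteq> 0" "orthogonal \<beta> y"
    using orthogonal_to_vector_exists[of \<beta>] assms by auto
  show ?thesis using that[of "y /\<^sub>R norm y"] y by (simp add: orthogonal_def)
qed

lemma typeA_exists:
  fixes \<beta> :: "real^'m" and \<gamma> :: "real^'n"
  assumes m2: "CARD('m) \<ge> 2" and al: "\<alpha> > 0" and ga: "\<forall>i. \<gamma> $ i > 0" and beta: "norm \<beta> = 1"
    and L1: "2 + \<alpha> \<le> sum (\<lambda>i. \<gamma> $ i) UNIV"
    and L2: "\<forall>k. 2 * \<gamma> $ k - sum (\<lambda>i. \<gamma> $ i) UNIV \<le> 2 + \<alpha>"
  shows "\<exists>(A :: (real^'m)^'n) q. equilibrium \<alpha> \<beta> \<gamma> A q \<and> typeA \<alpha> \<beta> \<gamma> A q"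
proof -
  define qq where "qq i = \<gamma> $ i / (2 + \<alpha>)" for i
  have a2: "2 + \<alpha> > 0" using al by simp
  have sq: "sum qq UNIV = sum (\<lambda>i. \<gamma> $ i) UNIV / (2 + \<alpha>)" unfolding qq_def by (simp add: sum_divide_distrib)
  have c1: "1 \<le> sum qq UNIV" unfolding sq using L1 a2 by (simp add: le_divide_eq)
  have c2: "\<forall>i\<in>UNIV. 2 * qq i - sum qq UNIV \<le> 1"
  proof
    fix i :: 'n
    have "2 * qq i - sum qq UNIV = (2 * \<gamma> $ i - sum (\<lambda>i. \<gamma> $ i) UNIV) / (2 + \<alpha>)"
      unfolding sq qq_def by (simp add: diff_divide_distrib)
    then show "2 * qq i - sum qq UNIV \<le> 1" using L2 a2 by (simp add: divide_le_eq)
  qed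
  have qpos: "\<forall>i\<in>UNIV. qq i > 0" unfolding qq_def using ga a2 by simp
  have P: "\<forall>r. 0 \<le> r \<longrightarrow> r \<le> sum qq UNIV \<longrightarrow> (\<forall>i\<in>UNIV. 2 * qq i - sum qq UNIV \<le> r) \<longrightarrow>
    (\<exists>z. (\<forall>i\<in>UNIV. cmod (z i) = 1) \<and> (\<Sum>i\<in>UNIV. of_real (qq i) * z i) = of_real r)"
    by (rule polygon_exists) (use qpos in auto)
  obtain z where z: "\<forall>i\<in>UNIV. cmod (z i) = 1" "(\<Sum>i\<in>UNIV. of_real (qq i) * z i) = (of_real 1::complex)"
    using P[rule_format, of 1, OF zero_le_one c1 c2[rule_format]] by blast
  obtain e :: "real^'m" where e: "norm e = 1" "\<beta> \<bullet> e = 0" using unit_orth[OF m2] by blast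
  define A :: "(real^'m)^'n" where "A = (\<chi> i. Re (z i) *\<^sub>R \<beta> + Im (z i) *\<^sub>R e)"
  define q :: "real^'n" where "q = (1 / (2 + \<alpha>)) *\<^sub>R \<gamma>"
  have bb: "\<beta> \<bullet> \<beta> = 1" using beta by (simp add: norm_eq_1)
  have ee: "e \<bullet> e = 1" using e by (simp add: norm_eq_1)
  have be: "e \<bullet> \<beta> = 0" using e by (simp add: inner_commute)
  have nA: "\<forall>i. norm (A $ i) = 1"
  proof
    fix i
    have "A $ i \<bullet> A $ i = (Re (z i))\<^sup>2 + (Im (z i))\<^sup>2"
      unfolding A_def using bb ee e(2) be by (simp add: algebra_simps inner_add_left inner_add_right power2_eq_square)
    also have "\<dots> = 1" using z(1) cmod_power2[of "z i"] by simp
    finally show "norm (A $ i) = 1" by (simp add: norm_eq_1)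
  qed
  have re: "(\<Sum>i\<in>UNIV. qq i * Re (z i)) = 1" using arg_cong[OF z(2), of Re] by simp
  have im: "(\<Sum>i\<in>UNIV. qq i * Im (z i)) = 0" using arg_cong[OF z(2), of Im] by simp
  have "Aq A q = (\<Sum>i\<in>UNIV. qq i * Re (z i)) *\<^sub>R \<beta> + (\<Sum>i\<in>UNIV. qq i * Im (z i)) *\<^sub>R e"
    unfolding Aq_def A_def q_def qq_def
    by (simp add: scaleR_sum_left sum.distrib scaleR_add_right)
  then have Aqb: "Aq A q = \<beta>" using re im by simp
  have "equilibrium \<alpha> \<beta> \<gamma> A q" using typeA_suff[OF al ga nA Aqb] q_def by simp
  moreover have "typeA \<alpha> \<beta> \<gamma> A q" unfolding typeA_def using Aqb q_def by simp
  ultimately show ?thesis by blast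
qed



theorem theorem1:
  fixes \<alpha> :: real and \<beta> :: "real^'m" and \<gamma> :: "real^'n"
  assumes n2: "CARD('n) \<ge> 2" and m2: "CARD('m) \<ge> 2"
    and alpha: "\<alpha> > 0" and beta: "norm \<beta> = 1"
    and gamma: "\<forall>i. \<gamma> $ i > 0"
  shows "(\<exists>(A :: (real^'m)^'n) q. equilibrium \<alpha> \<beta> \<gamma> A q \<and>
            (typeA \<alpha> \<beta> \<gamma> A q \<or> typeB \<beta> A \<or> typeC \<beta> \<gamma> A))
    \<and> (\<forall>(A :: (real^'m)^'n) q. equilibrium \<alpha> \<beta> \<gamma> A q \<longrightarrow>
          typeA \<alpha> \<beta> \<gamma> A q \<or>
          (\<exists>\<sigma> :: real^'n. (\<forall>i. \<sigma> $ i = -1 \<or> \<sigma> $ i = 1) \<and>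
             (\<forall>i. A $ i = (\<sigma> $ i) *\<^sub>R \<beta>) \<and>
             (\<forall>j. \<sigma> $ j = -1 \<longrightarrow>
                (2 + \<alpha>) - (2 + (real CARD('n) + 1) * \<alpha>) / (2 * (1 + \<alpha>)) * \<gamma> $ j \<le> \<sigma> \<bullet> \<gamma>) \<and>
             (\<forall>j. \<sigma> $ j = 1 \<longrightarrow>
                \<sigma> \<bullet> \<gamma> \<le> (2 + \<alpha>) + (2 + (real CARD('n) + 1) * \<alpha>) / (2 * (1 + \<alpha>)) * \<gamma> $ j) \<and>
             q = (1 / (2 + \<alpha>)) *\<^sub>R \<gamma>
                 - (\<alpha> * (\<sigma> \<bullet> \<gamma> - (2 + \<alpha>)) / ((2 + \<alpha>) * (2 + (real CARD('n) + 1) * \<alpha>))) *\<^sub>R \<sigma>))"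
proof (rule conjI)
  define C where "C = (2 + (real CARD('n) + 1) * \<alpha>) / (2 * (1 + \<alpha>))"
  have C1: "C \<ge> 1"
  proof -
    have "2 * (1 + \<alpha>) \<le> 2 + (real CARD('n) + 1) * \<alpha>"
    proof -
      have "2 * \<alpha> \<le> (real CARD('n) + 1) * \<alpha>" using n2 alpha by (intro mult_right_mono) auto
      then show ?thesis by simp
    qed
    then show ?thesis unfolding C_def using alpha by simp
  qed
  define L where "L = sum (\<lambda>i. \<gamma> $ i) UNIV"
  have gle: "\<gamma> $ k \<le> L" for k unfolding L_def using gamma
    by (intro member_le_sum) (auto intro: less_imp_le)
  show "\<exists>(A :: (real^'m)^'n) q. equilibrium \<alpha> \<beta> \<gamma> A q \<and>
            (typeA \<alpha> \<beta> \<gamma> A q \<or> typeB \<beta> A \<or> typeC \<beta> \<gamma> A)"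
  proof (cases "L < 2 + \<alpha>")
    case True
    define \<sigma> :: "real^'n" where "\<sigma> = (\<chi> i. 1)"
    define A :: "(real^'m)^'n" where "A = (\<chi> i. \<beta>)"
    define q :: "real^'n" where "q = (1 / (2 + \<alpha>)) *\<^sub>R \<gamma>
                 - (\<alpha> * (\<sigma> \<bullet> \<gamma> - (2 + \<alpha>)) / ((2 + \<alpha>) * (2 + (real CARD('n) + 1) * \<alpha>))) *\<^sub>R \<sigma>"
    have T: "\<sigma> \<bullet> \<gamma> = L" unfolding \<sigma>_def L_def inner_sg by simp
    have "equilibrium \<alpha> \<beta> \<gamma> A q"
    proof (rule sigma_suff[OF alpha gamma beta _ _ _ _ q_def])
      show "\<forall>i. \<sigma> $ i = -1 \<or> \<sigma> $ i = 1" unfolding \<sigma>_def by simp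
      show "\<forall>i. A $ i = (\<sigma> $ i) *\<^sub>R \<beta>" unfolding \<sigma>_def A_def by simp
      show "\<forall>j. \<sigma> $ j = -1 \<longrightarrow>
                (2 + \<alpha>) - (2 + (real CARD('n) + 1) * \<alpha>) / (2 * (1 + \<alpha>)) * \<gamma> $ j \<le> \<sigma> \<bullet> \<gamma>"
        unfolding \<sigma>_def by simp
      show "\<forall>j. \<sigma> $ j = 1 \<longrightarrow>
                \<sigma> \<bullet> \<gamma> \<le> (2 + \<alpha>) + (2 + (real CARD('n) + 1) * \<alpha>) / (2 * (1 + \<alpha>)) * \<gamma> $ j"
      proof (intro allI impI)
        fix j
        have "0 \<le> C * \<gamma> $ j" using C1 gamma by (simp add: less_imp_le)
        then show "\<sigma> \<bullet> \<gamma> \<le> (2 + \<alpha>) + (2 + (real CARD('n) + 1) * \<alpha>) / (2 * (1 + \<alpha>)) * \<gamma> $ j"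
          unfolding T C_def[symmetric] using True by linarith
      qed
    qed
    moreover have "typeB \<beta> A" unfolding typeB_def A_def by simp
    ultimately show ?thesis by blast
  next
    case False
    show ?thesis
    proof (cases "\<exists>k. 2 * \<gamma> $ k - L > 2 + \<alpha>")
      case True
      then obtain k where k: "2 * \<gamma> $ k - L > 2 + \<alpha>" by blast
      define \<sigma> :: "real^'n" where "\<sigma> = (\<chi> i. if i = k then 1 else -1)"
      define A :: "(real^'m)^'n" where "A = (\<chi> i. (\<sigma> $ i) *\<^sub>R \<beta>)"
      define q :: "real^'n" where "q = (1 / (2 + \<alpha>)) *\<^sub>R \<gamma>
                 - (\<alpha> * (\<sigma> \<bullet> \<gamma> - (2 + \<alpha>)) / ((2 + \<alpha>) * (2 + (real CARD('n) + 1) * \<alpha>))) *\<^sub>R \<sigma>"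
      have T: "\<sigma> \<bullet> \<gamma> = 2 * \<gamma> $ k - L"
      proof -
        have "\<sigma> \<bullet> \<gamma> = (\<Sum>i\<in>UNIV. (if i = k then 2 * \<gamma> $ i else 0) - \<gamma> $ i)"
          unfolding \<sigma>_def inner_sg by (intro sum.cong) auto
        also have "\<dots> = 2 * \<gamma> $ k - L" unfolding L_def by (simp add: sum_subtractf)
        finally show ?thesis .
      qed
      have "equilibrium \<alpha> \<beta> \<gamma> A q"
      proof (rule sigma_suff[OF alpha gamma beta _ _ _ _ q_def])
        show "\<forall>i. \<sigma> $ i = -1 \<or> \<sigma> $ i = 1" unfolding \<sigma>_def by simp
        show "\<forall>i. A $ i = (\<sigma> $ i) *\<^sub>R \<beta>" unfolding A_def by simp
        show "\<forall>j. \<sigma> $ j = -1 \<longrightarrow>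
                (2 + \<alpha>) - (2 + (real CARD('n) + 1) * \<alpha>) / (2 * (1 + \<alpha>)) * \<gamma> $ j \<le> \<sigma> \<bullet> \<gamma>"
        proof (intro allI impI)
          fix j
          have "0 \<le> C * \<gamma> $ j" using C1 gamma by (simp add: less_imp_le)
          then show "(2 + \<alpha>) - (2 + (real CARD('n) + 1) * \<alpha>) / (2 * (1 + \<alpha>)) * \<gamma> $ j \<le> \<sigma> \<bullet> \<gamma>"
            unfolding T C_def[symmetric] using k by linarith
        qed
        show "\<forall>j. \<sigma> $ j = 1 \<longrightarrow>
                \<sigma> \<bullet> \<gamma> \<le> (2 + \<alpha>) + (2 + (real CARD('n) + 1) * \<alpha>) / (2 * (1 + \<alpha>)) * \<gamma> $ j"
        proof (intro allI impI)
          fix j assume "\<sigma> $ j = 1"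
          then have jk: "j = k" unfolding \<sigma>_def by (auto split: if_splits)
          have "\<gamma> $ k \<le> C * \<gamma> $ k" using C1 gamma mult_right_mono[OF C1, of "\<gamma> $ k"] by (simp add: less_imp_le)
          then show "\<sigma> \<bullet> \<gamma> \<le> (2 + \<alpha>) + (2 + (real CARD('n) + 1) * \<alpha>) / (2 * (1 + \<alpha>)) * \<gamma> $ j"
            unfolding T C_def[symmetric] jk using gle[of k] alpha by linarith
        qed
      qed
      moreover have "typeC \<beta> \<gamma> A"
        unfolding typeC_def
      proof (intro exI[of _ k] conjI allI impI)
        show "A $ k = \<beta>" unfolding A_def \<sigma>_def by simp
        show "A $ j = - \<beta>" if "j \<noteq> k" for j unfolding A_def \<sigma>_def using that by simp
        show "\<gamma> $ k = Max (range (\<lambda>k. \<gamma> $ k))"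
        proof (rule Max_eqI[symmetric])
          show "finite (range (\<lambda>k. \<gamma> $ k))" by simp
          show "\<gamma> $ k \<in> range (\<lambda>k. \<gamma> $ k)" by simp
          fix y assume "y \<in> range (\<lambda>k. \<gamma> $ k)"
          then obtain j where yj: "y = \<gamma> $ j" by blast
          show "y \<le> \<gamma> $ k"
          proof (cases "j = k")
            case True then show ?thesis using yj by simp
          next
            case False
            have "sum (\<lambda>i. \<gamma> $ i) {j, k} \<le> L" unfolding L_def using gamma
              by (intro sum_mono2) (auto intro: less_imp_le)
            then have "\<gamma> $ j + \<gamma> $ k \<le> L" using False by simp
            then show ?thesis using yj k alpha by linarith
          qed
        qed
      qed
      ultimately show ?thesis by blast
    next
      case False2: False
      have L1: "2 + \<alpha> \<le> L" using False by simp
      have L2: "\<forall>k. 2 * \<gamma> $ k - L \<le> 2 + \<alpha>" using False2 by (simp add: not_less)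
      show ?thesis using typeA_exists[OF m2 alpha gamma beta L1[unfolded L_def] L2[unfolded L_def]] by blast
    qed
  qed
next
  show "\<forall>(A :: (real^'m)^'n) q. equilibrium \<alpha> \<beta> \<gamma> A q \<longrightarrow>
          typeA \<alpha> \<beta> \<gamma> A q \<or>
          (\<exists>\<sigma> :: real^'n. (\<forall>i. \<sigma> $ i = -1 \<or> \<sigma> $ i = 1) \<and>
             (\<forall>i. A $ i = (\<sigma> $ i) *\<^sub>R \<beta>) \<and>
             (\<forall>j. \<sigma> $ j = -1 \<longrightarrow>
                (2 + \<alpha>) - (2 + (real CARD('n) + 1) * \<alpha>) / (2 * (1 + \<alpha>)) * \<gamma> $ j \<le> \<sigma> \<bullet> \<gamma>) \<and>
             (\<forall>j. \<sigma> $ j = 1 \<longrightarrow>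
                \<sigma> \<bullet> \<gamma> \<le> (2 + \<alpha>) + (2 + (real CARD('n) + 1) * \<alpha>) / (2 * (1 + \<alpha>)) * \<gamma> $ j) \<and>
             q = (1 / (2 + \<alpha>)) *\<^sub>R \<gamma>
                 - (\<alpha> * (\<sigma> \<bullet> \<gamma> - (2 + \<alpha>)) / ((2 + \<alpha>) * (2 + (real CARD('n) + 1) * \<alpha>))) *\<^sub>R \<sigma>)"
  proof (intro allI impI)
    fix A :: "(real^'m)^'n" and q
    assume eq: "equilibrium \<alpha> \<beta> \<gamma> A q"
    show "typeA \<alpha> \<beta> \<gamma> A q \<or>
          (\<exists>\<sigma> :: real^'n. (\<forall>i. \<sigma> $ i = -1 \<or> \<sigma> $ i = 1) \<and>
             (\<forall>i. A $ i = (\<sigma> $ i) *\<^sub>R \<beta>) \<and>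
             (\<forall>j. \<sigma> $ j = -1 \<longrightarrow>
                (2 + \<alpha>) - (2 + (real CARD('n) + 1) * \<alpha>) / (2 * (1 + \<alpha>)) * \<gamma> $ j \<le> \<sigma> \<bullet> \<gamma>) \<and>
             (\<forall>j. \<sigma> $ j = 1 \<longrightarrow>
                \<sigma> \<bullet> \<gamma> \<le> (2 + \<alpha>) + (2 + (real CARD('n) + 1) * \<alpha>) / (2 * (1 + \<alpha>)) * \<gamma> $ j) \<and>
             q = (1 / (2 + \<alpha>)) *\<^sub>R \<gamma>
                 - (\<alpha> * (\<sigma> \<bullet> \<gamma> - (2 + \<alpha>)) / ((2 + \<alpha>) * (2 + (real CARD('n) + 1) * \<alpha>))) *\<^sub>R \<sigma>)"
    proof (cases "typeA \<alpha> \<beta> \<gamma> A q")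
      case True then show ?thesis by blast
    next
      case False
      then have pm: "\<forall>i. A $ i = \<beta> \<or> A $ i = - \<beta>" using part2_sign[OF alpha gamma beta eq] by blast
      define \<sigma> :: "real^'n" where "\<sigma> = (\<chi> i. if A $ i = \<beta> then 1 else -1)"
      have sg: "\<forall>i. \<sigma> $ i = -1 \<or> \<sigma> $ i = 1" unfolding \<sigma>_def by simp
      have As: "\<forall>i. A $ i = (\<sigma> $ i) *\<^sub>R \<beta>" unfolding \<sigma>_def using pm by auto
      show ?thesis using sigma_nec[OF alpha gamma beta eq sg As] sg As by blast
    qed
  qed
qed

end
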